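(* Let $N\ge 2$, $0<p<1\le q$ with $pq<1$. Consider the vector field $g:\mathbb{R}^3\to\mathbb{R}^3$, $$g(Y,Z,W)=\big(Y(W-(N-2)-Y),\ Z(N+pY-Z),\ W(qZ-qN+q+N-W)\big).$$ Then the equilibrium $$\zeta_2=\Big(\frac{2+q}{1-pq},\ N+\frac{p(2+q)}{1-pq},\ N-2+\frac{2+q}{1-pq}\Big)$$ of $\zeta_t=g(\zeta)$ is asymptotically stable (indeed all eigenvalues of the Jacobian $Dg(\zeta_2)$ have negative real part). *)

theory Defs
  imports "HOL-Analysis.Analysis"
begin

definition gfield :: "real \<Rightarrow> real \<Rightarrow> real \<Rightarrow> real^3 \<Rightarrow> real^3" where
  "gfield N p q \<zeta> =
     (let Y = \<zeta>$1; Z = \<zeta>$2; W = \<zeta>$3 in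
      vector [Y * (W - (N - 2) - Y),
              Z * (N + p * Y - Z),
              W * (q * Z - q * N + q + N - W)])"

definition real_matrix_eigenvalue :: "real^'n^'n \<Rightarrow> complex \<Rightarrow> bool" where
  "real_matrix_eigenvalue A \<mu> \<longleftrightarrow>
     (\<exists>v::complex^'n. v \<noteq> 0 \<and>
        (\<chi> i. \<Sum>j\<in>UNIV. complex_of_real (A$i$j) * v$j) = \<mu> *s v)"

definition ode_solution :: "('a::real_normed_vector \<Rightarrow> 'a) \<Rightarrow> (real \<Rightarrow> 'a) \<Rightarrow> bool" where
  "ode_solution f x \<longleftrightarrow>
     (\<forall>t\<ge>0. (x has_vector_derivative f (x t)) (at t within {0..}))"

definition asymptotically_stable :: "('a::real_normed_vector \<Rightarrow> 'a) \<Rightarrow> 'a \<Rightarrow> bool" where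
  "asymptotically_stable f x0 \<longleftrightarrow>
     f x0 = 0 \<and>
     (\<forall>\<epsilon>>0. \<exists>\<delta>>0. \<forall>x. ode_solution f x \<and> dist (x 0) x0 < \<delta> \<longrightarrow>
         (\<forall>t\<ge>0. dist (x t) x0 < \<epsilon>)) \<and>
     (\<exists>\<delta>>0. \<forall>x. ode_solution f x \<and> dist (x 0) x0 < \<delta> \<longrightarrow>
         (x \<longlongrightarrow> x0) at_top)"

end

theory Submission
  imports Defs
begin




lemma eig_lemma:
  fixes a b w p q :: real
  assumes a: "a > 0" and b: "b > 0" and w: "w > 0" and p: "p > 0" and q: "q > 0" and pq: "p*q < 1"
  assumes ev: "real_matrix_eigenvalue (vector [vector[-a,0,a], vector[p*b,-b,0], vector[0,q*w,-w]] :: real^3^3) \<mu>"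
  shows "Re \<mu> < 0"
proof (rule ccontr)
  assume "\<not> Re \<mu> < 0"
  hence re: "Re \<mu> \<ge> 0" by simp
  obtain v :: "complex^3" where v0: "v \<noteq> 0" and eq: "(\<chi> i. \<Sum>j\<in>UNIV. complex_of_real ((vector [vector[-a,0,a], vector[p*b,-b,0], vector[0,q*w,-w]] :: real^3^3)$i$j) * v$j) = \<mu> *s v"
    using ev unfolding real_matrix_eigenvalue_def by blast
  have e1: "(\<mu> + of_real a) * v$1 = of_real a * v$3"
    using arg_cong[OF eq, of "\<lambda>x. x$1"] by (simp add: sum_3 algebra_simps)
  have e2: "(\<mu> + of_real b) * v$2 = of_real (p*b) * v$1"
    using arg_cong[OF eq, of "\<lambda>x. x$2"] by (simp add: sum_3 algebra_simps)
  have e3: "(\<mu> + of_real w) * v$3 = of_real (q*w) * v$2"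
    using arg_cong[OF eq, of "\<lambda>x. x$3"] by (simp add: sum_3 algebra_simps)
  have ge: "cmod (\<mu> + of_real c) \<ge> c" if "c > 0" for c
  proof -
    have "c \<le> Re (\<mu> + of_real c)" using re by simp
    also have "\<dots> \<le> cmod (\<mu> + of_real c)" by (rule complex_Re_le_cmod)
    finally show ?thesis .
  qed
  have n1: "cmod (v$1) \<le> cmod (v$3)"
  proof -
    have "a * cmod (v$1) \<le> cmod (\<mu> + of_real a) * cmod (v$1)"
      using ge[OF a] by (simp add: mult_right_mono)
    also have "\<dots> = a * cmod (v$3)" using arg_cong[OF e1, of cmod] a by (simp add: norm_mult)
    finally show ?thesis using a by simp
  qed
  have n2: "cmod (v$2) \<le> p * cmod (v$1)"
  proof -
    have "b * cmod (v$2) \<le> cmod (\<mu> + of_real b) * cmod (v$2)"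
      using ge[OF b] by (simp add: mult_right_mono)
    also have "\<dots> = b * (p * cmod (v$1))" using arg_cong[OF e2, of cmod] b p by (simp add: norm_mult abs_mult)
    finally show ?thesis using b by simp
  qed
  have n3: "cmod (v$3) \<le> q * cmod (v$2)"
  proof -
    have "w * cmod (v$3) \<le> cmod (\<mu> + of_real w) * cmod (v$3)"
      using ge[OF w] by (simp add: mult_right_mono)
    also have "\<dots> = w * (q * cmod (v$2))" using arg_cong[OF e3, of cmod] w q by (simp add: norm_mult abs_mult)
    finally show ?thesis using w by simp
  qed
  have "cmod (v$1) \<le> (p*q) * cmod (v$1)"
  proof -
    have "cmod (v$1) \<le> q * cmod (v$2)" using n1 n3 by linarith
    also have "\<dots> \<le> q * (p * cmod (v$1))" using n2 q by (simp add: mult_left_mono)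
    finally show ?thesis by (simp add: algebra_simps)
  qed
  hence z1: "cmod (v$1) = 0" using pq mult_right_mono[of "p*q" 1 "cmod (v$1)"]
    by (smt (verit) norm_ge_zero mult_le_cancel_right1)
  hence z2: "cmod (v$2) = 0" using n2 norm_ge_zero[of "v$2"] by simp
  hence z3: "cmod (v$3) = 0" using n3 norm_ge_zero[of "v$3"] by simp
  have "v = 0" using z1 z2 z3 by (simp add: vec_eq_iff forall_3)
  with v0 show False by simp
qed



lemma gfield_comp:
  "gfield N p q y $ 1 = y$1 * (y$3 - (N - 2) - y$1)"
  "gfield N p q y $ 2 = y$2 * (N + p * y$1 - y$2)"
  "gfield N p q y $ 3 = y$3 * (q * y$2 - q * N + q + N - y$3)"
  by (simp_all add: gfield_def Let_def)

lemma nth_deriv: "((\<lambda>x::real^3. x $ i) has_derivative (\<lambda>h. h $ i)) F"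
  by (rule bounded_linear_imp_has_derivative) (rule bounded_linear_vec_nth)

lemma gfield_deriv:
  fixes y :: "real^3" and N p q :: real
  defines "A \<equiv> vector [vector [y$3 - (N-2) - 2*y$1, 0, y$1],
                      vector [p*y$2, N + p*y$1 - 2*y$2, 0],
                      vector [0, q*y$3, q*y$2 - q*N + q + N - 2*y$3]] :: real^3^3"
  shows "(gfield N p q has_derivative (\<lambda>h. A *v h)) (at y)"
proof -
  have "((\<lambda>x. gfield N p q x $ i) has_derivative (\<lambda>h. (A *v h) $ i)) (at y)" for i
  proof -
    consider "i = 1" | "i = 2" | "i = 3" using exhaust_3 by blast
    then show ?thesis
    proof cases
      case 1
      show ?thesis unfolding 1 gfield_comp
        by (rule derivative_eq_intros nth_deriv refl | simp)+
           (simp add: A_def matrix_vector_mult_def sum_3 algebra_simps)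
    next
      case 2
      show ?thesis unfolding 2 gfield_comp
        by (rule derivative_eq_intros nth_deriv refl | simp)+
           (simp add: A_def matrix_vector_mult_def sum_3 algebra_simps)
    next
      case 3
      show ?thesis unfolding 3 gfield_comp
        by (rule derivative_eq_intros nth_deriv refl | simp)+
           (simp add: A_def matrix_vector_mult_def sum_3 algebra_simps)
    qed
  qed
  then show ?thesis
    by (subst has_derivative_componentwise_within) (auto simp: Basis_vec_def cart_eq_inner_axis[symmetric])
qed



lemma keyQ:
  fixes p q s u1 u2 u3 :: real
  assumes p: "p > 0" and s: "s > 0" "s < 1" and s3: "s^3 = p*q"
  shows "u1*(u3-u1) + (s^2/p^2)*u2*(p*u1-u2) + (1/s^2)*u3*(q*u2-u3)
         \<le> -(1-s) * (u1^2 + (s^2/p^2)*u2^2 + u3^2/s^2)"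
proof -
  define z1 z2 z3 where "z1 = u1" "z2 = s*u2/p" "z3 = u3/s"
  have qe: "q = s^3/p" using s3 p by (simp add: field_simps)
  have E1: "u1*(u3-u1) + (s^2/p^2)*u2*(p*u1-u2) + (1/s^2)*u3*(q*u2-u3)
      = -(z1^2+z2^2+z3^2) + s*(z1*z2+z1*z3+z2*z3)"
    unfolding z1_z2_z3_def qe using p s by (simp add: field_simps power2_eq_square power3_eq_cube)
  have E2: "u1^2 + (s^2/p^2)*u2^2 + u3^2/s^2 = z1^2+z2^2+z3^2"
    unfolding z1_z2_z3_def using p s by (simp add: field_simps power2_eq_square)
  have P: "z1*z2+z1*z3+z2*z3 \<le> z1^2+z2^2+z3^2"
  proof -
    have "0 \<le> (z1-z2)^2 + (z1-z3)^2 + (z2-z3)^2" by simp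
    thus ?thesis by (simp add: power2_eq_square algebra_simps)
  qed
  have "s*(z1*z2+z1*z3+z2*z3) \<le> s*(z1^2+z2^2+z3^2)" using P s by (simp add: mult_left_mono)
  thus ?thesis unfolding E1 E2 by (simp add: algebra_simps)
qed

lemma key:
  fixes a b w p q s u1 u2 u3 \<rho> \<mu> L k1 k2 k3 :: real
  assumes a: "a > 0" and b: "b > 0" and w: "w > 0" and p: "p > 0" and q: "q > 0"
    and s: "s > 0" "s < 1" and s3: "s^3 = p*q"
    and mu: "\<mu> > 0" "\<mu> \<le> a" "\<mu> \<le> b" "\<mu> \<le> w"
    and L: "L = p + q + 2" and rho: "\<rho> = (1-s)*\<mu>/(2*L)"
    and k: "k1 = 1/a" "k2 = s^2/(p^2*b)" "k3 = 1/(s^2*w)"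
    and u: "\<bar>u1\<bar> \<le> \<rho>" "\<bar>u2\<bar> \<le> \<rho>" "\<bar>u3\<bar> \<le> \<rho>"
  shows "2*(k1*u1*(a+u1)*(u3-u1) + k2*u2*(b+u2)*(p*u1-u2) + k3*u3*(w+u3)*(q*u2-u3))
         \<le> -((1-s)*\<mu>) * (k1*u1^2 + k2*u2^2 + k3*u3^2)"
proof -
  have ka: "k1*a = 1" "k2*b = s^2/p^2" "k3*w = 1/s^2" using a b w p s k by (simp_all add: field_simps)
  have kpos: "k1 \<ge> 0" "k2 \<ge> 0" "k3 \<ge> 0" using a b w p s k by simp_all
  define Q where "Q = u1*(u3-u1) + (s^2/p^2)*u2*(p*u1-u2) + (1/s^2)*u3*(q*u2-u3)"
  define R where "R = k1*u1^2*(u3-u1) + k2*u2^2*(p*u1-u2) + k3*u3^2*(q*u2-u3)"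
  define V where "V = k1*u1^2 + k2*u2^2 + k3*u3^2"
  define C where "C = u1^2 + (s^2/p^2)*u2^2 + u3^2/s^2"
  have split: "k1*u1*(a+u1)*(u3-u1) + k2*u2*(b+u2)*(p*u1-u2) + k3*u3*(w+u3)*(q*u2-u3) = Q + R"
  proof -
    have "k1*u1*(a+u1)*(u3-u1) = (k1*a)*u1*(u3-u1) + k1*u1^2*(u3-u1)"
      by (simp add: algebra_simps power2_eq_square)
    moreover have "k2*u2*(b+u2)*(p*u1-u2) = (k2*b)*u2*(p*u1-u2) + k2*u2^2*(p*u1-u2)"
      by (simp add: algebra_simps power2_eq_square)
    moreover have "k3*u3*(w+u3)*(q*u2-u3) = (k3*w)*u3*(q*u2-u3) + k3*u3^2*(q*u2-u3)"
      by (simp add: algebra_simps power2_eq_square)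
    ultimately show ?thesis unfolding Q_def R_def ka by simp
  qed
  have hQ: "Q \<le> -(1-s)*C" unfolding Q_def C_def by (rule keyQ[OF p s s3])
  have rho0: "\<rho> \<ge> 0" using u by simp
  have Lrho: "L*\<rho> = (1-s)*\<mu>/2" using L p q rho by (simp add: field_simps)
  have twoL: "2*\<rho> \<le> L*\<rho>" "(p+1)*\<rho> \<le> L*\<rho>" "(q+1)*\<rho> \<le> L*\<rho>"
    using L p q rho0 by (simp_all add: mult_right_mono)
  have b1: "u3-u1 \<le> L*\<rho>" using u twoL by linarith
  have b2: "p*u1-u2 \<le> L*\<rho>"
  proof -
    have "p*u1 \<le> p*\<rho>" using u p by (smt (verit) mult_left_mono abs_le_iff)
    thus ?thesis using u twoL by (simp add: algebra_simps)
  qed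
  have b3: "q*u2-u3 \<le> L*\<rho>"
  proof -
    have "q*u2 \<le> q*\<rho>" using u q by (smt (verit) mult_left_mono abs_le_iff)
    thus ?thesis using u twoL by (simp add: algebra_simps)
  qed
  have hR: "R \<le> (L*\<rho>)*V"
  proof -
    have "k1*u1^2*(u3-u1) \<le> k1*u1^2*(L*\<rho>)" using b1 kpos by (simp add: mult_left_mono)
    moreover have "k2*u2^2*(p*u1-u2) \<le> k2*u2^2*(L*\<rho>)" using b2 kpos by (simp add: mult_left_mono)
    moreover have "k3*u3^2*(q*u2-u3) \<le> k3*u3^2*(L*\<rho>)" using b3 kpos by (simp add: mult_left_mono)
    ultimately show ?thesis unfolding R_def V_def by (simp add: algebra_simps)
  qed
  have hC: "\<mu>*V \<le> C"
  proof -
    have "C = (k1*a)*u1^2 + (k2*b)*u2^2 + (k3*w)*u3^2" unfolding C_def ka by simp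
    moreover have "\<mu>*(k1*u1^2) \<le> a*(k1*u1^2)" using mu kpos by (simp add: mult_right_mono)
    moreover have "\<mu>*(k2*u2^2) \<le> b*(k2*u2^2)" using mu kpos by (simp add: mult_right_mono)
    moreover have "\<mu>*(k3*u3^2) \<le> w*(k3*u3^2)" using mu kpos by (simp add: mult_right_mono)
    ultimately show ?thesis unfolding V_def by (simp add: algebra_simps)
  qed
  have hC2: "-(1-s)*C \<le> -(1-s)*(\<mu>*V)" using hC s by (simp add: mult_left_mono)
  have "Q+R \<le> -(1-s)*(\<mu>*V) + (L*\<rho>)*V" using add_mono[OF order_trans[OF hQ hC2] hR] by simp
  hence "2*(Q+R) \<le> 2*(-(1-s)*(\<mu>*V) + (L*\<rho>)*V)" by simp
  also have "\<dots> = -((1-s)*\<mu>)*V" unfolding Lrho by (simp add: field_simps)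
  finally show ?thesis unfolding split V_def .
qed



lemma norm3_sq: "(norm (y::real^3))^2 = (y$1)^2 + (y$2)^2 + (y$3)^2"
  by (simp add: norm_vec_def L2_set_def sum_3)

lemma deriv_open0:
  assumes "(f has_real_derivative d) (at t within {0..})" "t > 0"
  shows "(f has_real_derivative d) (at t)"
proof -
  have "(f has_real_derivative d) (at t within {0<..})"
    by (rule DERIV_subset[OF assms(1)]) (simp add: subset_eq)
  moreover have "at t within {0<..} = at t"
    by (rule at_within_open) (use assms(2) in auto)
  ultimately show ?thesis by simp
qed

lemma deriv_cont0:
  assumes "\<And>t. t \<ge> 0 \<Longrightarrow> (f has_real_derivative f' t) (at t within {0..})"
  shows "continuous_on {0..} f"
  using assms by (auto simp: continuous_on_eq_continuous_within intro: DERIV_continuous)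

lemma deriv_mono0:
  assumes "\<And>t. t \<ge> 0 \<Longrightarrow> (f has_real_derivative f' t) (at t within {0..})"
    and "\<And>t. 0 < t \<Longrightarrow> t < T \<Longrightarrow> f' t \<le> 0" and "T \<ge> 0"
  shows "f T \<le> f 0"
proof (rule DERIV_nonpos_imp_decreasing_open[OF \<open>T \<ge> 0\<close>])
  show "\<And>x. 0 < x \<Longrightarrow> x < T \<Longrightarrow> \<exists>y. (f has_real_derivative y) (at x) \<and> y \<le> 0"
    using assms deriv_open0 by (meson less_imp_le)
  show "continuous_on {0..T} f"
    using deriv_cont0[OF assms(1)] by (rule continuous_on_subset) auto
qed

locale lv =
  fixes g :: "real^3 \<Rightarrow> real^3" and a b w p q s :: real
  assumes pos: "a > 0" "b > 0" "w > 0" "p > 0" "q > 0"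
    and sp: "s > 0" "s < 1" "s^3 = p*q"
    and g1: "\<And>y. g y $ 1 = y$1 * ((y$3 - w) - (y$1 - a))"
    and g2: "\<And>y. g y $ 2 = y$2 * (p*(y$1 - a) - (y$2 - b))"
    and g3: "\<And>y. g y $ 3 = y$3 * (q*(y$2 - b) - (y$3 - w))"
begin

definition "zz = (vector [a,b,w] :: real^3)"
definition "mu = min a (min b w)"
definition "LL = p + q + 2"
definition "rho = (1-s)*mu/(2*LL)"
definition "k1 = 1/a"
definition "k2 = s^2/(p^2*b)"
definition "k3 = 1/(s^2*w)"
definition V :: "real^3 \<Rightarrow> real" where "V y = k1*(y$1-a)^2 + k2*(y$2-b)^2 + k3*(y$3-w)^2"
definition DV :: "real^3 \<Rightarrow> real" where "DV y = 2*(k1*(y$1-a)*(g y$1) + k2*(y$2-b)*(g y$2) + k3*(y$3-w)*(g y$3))"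
definition "cc = (1-s)*mu"
definition "mm = min k1 (min k2 k3)"
definition "MM = max k1 (max k2 k3)"

lemma mu_pos: "mu > 0" using pos by (simp add: mu_def)
lemma rho_pos: "rho > 0" using pos sp mu_pos by (simp add: rho_def LL_def)
lemma cc_pos: "cc > 0" using sp mu_pos by (simp add: cc_def)
lemma k_pos: "k1 > 0" "k2 > 0" "k3 > 0" using pos sp by (simp_all add: k1_def k2_def k3_def)
lemma mm_pos: "mm > 0" using k_pos by (simp add: mm_def)
lemma mm_MM: "mm \<le> MM" by (simp add: mm_def MM_def)

lemma g_zero: "g zz = 0"
  by (simp add: vec_eq_iff forall_3 g1 g2 g3 zz_def)

lemma DV_le:
  assumes "norm (y - zz) \<le> rho"
  shows "DV y \<le> - cc * V y"
proof -
  have u: "\<bar>y$i - zz$i\<bar> \<le> rho" for i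
    using component_le_norm_cart[of "y - zz" i] assms by simp
  have "2*(k1*(y$1-a)*(a+(y$1-a))*((y$3-w)-(y$1-a)) + k2*(y$2-b)*(b+(y$2-b))*(p*(y$1-a)-(y$2-b))
          + k3*(y$3-w)*(w+(y$3-w))*(q*(y$2-b)-(y$3-w)))
        \<le> -((1-s)*mu) * (k1*(y$1-a)^2 + k2*(y$2-b)^2 + k3*(y$3-w)^2)"
    apply (rule key[OF pos sp mu_pos _ _ _ LL_def rho_def k1_def k2_def k3_def])
    using u[of 1] u[of 2] u[of 3] by (simp_all add: mu_def zz_def)
  thus ?thesis by (simp add: DV_def V_def g1 g2 g3 cc_def algebra_simps)
qed

lemma V_lower: "mm * (norm (y - zz))^2 \<le> V y"
proof -
  have "mm * (norm (y - zz))^2 = mm*(y$1-a)^2 + mm*(y$2-b)^2 + mm*(y$3-w)^2"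
    by (simp add: norm3_sq zz_def algebra_simps)
  also have "\<dots> \<le> V y" unfolding V_def
    by (intro add_mono mult_right_mono) (auto simp: mm_def)
  finally show ?thesis .
qed

lemma V_upper: "V y \<le> MM * (norm (y - zz))^2"
proof -
  have "MM * (norm (y - zz))^2 = MM*(y$1-a)^2 + MM*(y$2-b)^2 + MM*(y$3-w)^2"
    by (simp add: norm3_sq zz_def algebra_simps)
  moreover have "V y \<le> MM*(y$1-a)^2 + MM*(y$2-b)^2 + MM*(y$3-w)^2" unfolding V_def
    by (intro add_mono mult_right_mono) (auto simp: MM_def)
  ultimately show ?thesis by simp
qed

lemma V_deriv:
  assumes "ode_solution g x" "t \<ge> 0"
  shows "((\<lambda>t. V (x t)) has_real_derivative DV (x t)) (at t within {0..})"
proof -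
  have xd: "(x has_vector_derivative g (x t)) (at t within {0..})"
    using assms unfolding ode_solution_def by blast
  have c: "((\<lambda>t. x t $ i) has_real_derivative g (x t) $ i) (at t within {0..})" for i
    unfolding has_real_derivative_iff_has_vector_derivative
    by (rule bounded_linear.has_vector_derivative[OF bounded_linear_vec_nth xd])
  show ?thesis unfolding V_def
    by (rule derivative_eq_intros c refl | simp)+ (simp add: DV_def algebra_simps)
qed

lemma x_cont:
  assumes "ode_solution g x"
  shows "continuous_on {0..} x"
  using assms unfolding ode_solution_def
  by (auto simp: continuous_on_eq_continuous_within intro: has_vector_derivative_continuous)


definition "del0 = rho * mm / MM"

lemma MM_pos: "MM > 0" using mm_pos mm_MM by simp
lemma del0_pos: "del0 > 0" using rho_pos mm_pos MM_pos by (simp add: del0_def)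
lemma del0_sq: "MM * del0^2 \<le> mm * rho^2"
proof -
  have "MM * del0^2 = (mm/MM) * (mm * rho^2)" using MM_pos by (simp add: del0_def power2_eq_square field_simps)
  also have "\<dots> \<le> 1 * (mm * rho^2)"
    using mm_MM MM_pos mm_pos by (intro mult_right_mono) auto
  finally show ?thesis by simp
qed

lemma V_nonneg: "V y \<ge> 0"
  using V_lower[of y] mm_pos by (smt (verit) zero_le_power2 mult_nonneg_nonneg)

lemma stays:
  assumes sol: "ode_solution g x" and x0: "norm (x 0 - zz) < del0"
  shows "\<forall>t\<ge>0. norm (x t - zz) < rho"
proof (rule ccontr)
  assume "\<not> ?thesis"
  then obtain t0 where t0: "t0 \<ge> 0" "\<not> norm (x t0 - zz) < rho" by blast
  define E where "E = {t \<in> {0..}. rho \<le> norm (x t - zz)}"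
  have Ene: "E \<noteq> {}" using t0 unfolding E_def by auto
  have Ecl: "closed E" unfolding E_def
    by (intro continuous_on_closed_Collect_le continuous_intros x_cont[OF sol] closed_atLeast)
  have Ebdd: "bdd_below E" unfolding E_def by (rule bdd_belowI[of _ 0]) auto
  define T where "T = Inf E"
  have TE: "T \<in> E" unfolding T_def by (rule closed_contains_Inf[OF Ene Ebdd Ecl])
  hence T0: "T \<ge> 0" and nT: "rho \<le> norm (x T - zz)" unfolding E_def by auto
  have before: "norm (x t - zz) < rho" if "0 \<le> t" "t < T" for t
  proof (rule ccontr)
    assume "\<not> ?thesis"
    hence "t \<in> E" using that unfolding E_def by auto
    hence "T \<le> t" unfolding T_def using Ebdd by (rule cInf_lower)
    with that show False by simp
  qed
  have "V (x T) \<le> V (x 0)"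
  proof (rule deriv_mono0[where f="\<lambda>t. V (x t)" and f'="\<lambda>t. DV (x t)"])
    show "\<And>t. 0 \<le> t \<Longrightarrow> ((\<lambda>t. V (x t)) has_real_derivative DV (x t)) (at t within {0..})"
      by (rule V_deriv[OF sol])
    show "DV (x t) \<le> 0" if "0 < t" "t < T" for t
    proof -
      have "DV (x t) \<le> - cc * V (x t)" using before[of t] that by (intro DV_le) auto
      also have "\<dots> \<le> 0" using cc_pos V_nonneg[of "x t"] by simp
      finally show ?thesis .
    qed
  qed (rule T0)
  moreover have "mm * rho^2 \<le> V (x T)"
  proof -
    have "mm * rho^2 \<le> mm * (norm (x T - zz))^2"
      using nT rho_pos mm_pos by (intro mult_left_mono power_mono) auto
    thus ?thesis using V_lower[of "x T"] by linarith
  qed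
  moreover have "V (x 0) < mm * rho^2"
  proof -
    have "(norm (x 0 - zz))^2 < del0^2" using x0 by (intro power_strict_mono) auto
    hence "MM * (norm (x 0 - zz))^2 < MM * del0^2" using MM_pos by simp
    thus ?thesis using V_upper[of "x 0"] del0_sq by linarith
  qed
  ultimately show False by linarith
qed

lemma decay:
  assumes sol: "ode_solution g x" and x0: "norm (x 0 - zz) < del0" and t: "t \<ge> 0"
  shows "V (x t) * exp (cc * t) \<le> V (x 0)"
proof -
  have st: "norm (x t - zz) < rho" if "t \<ge> 0" for t using stays[OF sol x0] that by blast
  have "(\<lambda>t. V (x t) * exp (cc * t)) t \<le> (\<lambda>t. V (x t) * exp (cc * t)) 0"
  proof (rule deriv_mono0[where f'="\<lambda>t. DV (x t) * exp (cc*t) + V (x t) * (exp (cc*t) * cc)"])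
    show "((\<lambda>t. V (x t) * exp (cc * t)) has_real_derivative
            DV (x t) * exp (cc*t) + V (x t) * (exp (cc*t) * cc)) (at t within {0..})" if "t \<ge> 0" for t
      by (rule derivative_eq_intros V_deriv[OF sol that] refl | simp)+
    show "DV (x t) * exp (cc*t) + V (x t) * (exp (cc*t) * cc) \<le> 0" if "0 < t" "t < T" for t T
    proof -
      have "DV (x t) \<le> - cc * V (x t)" using st[of t] that by (intro DV_le) auto
      hence "DV (x t) + cc * V (x t) \<le> 0" by simp
      hence "(DV (x t) + cc * V (x t)) * exp (cc*t) \<le> 0" by (simp add: mult_nonpos_nonneg)
      thus ?thesis by (simp add: algebra_simps)
    qed
  qed (rule t)
  thus ?thesis by simp
qed

theorem asym: "asymptotically_stable g zz"
  unfolding asymptotically_stable_def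
proof (intro conjI allI impI)
  show "g zz = 0" by (rule g_zero)
next
  fix e :: real assume e: "e > 0"
  define d where "d = min del0 (e * mm / MM)"
  have d0: "d > 0" using del0_pos e mm_pos MM_pos by (simp add: d_def)
  have dsq: "MM * d^2 \<le> mm * e^2"
  proof -
    have "d \<le> e * mm / MM" by (simp add: d_def)
    hence "d^2 \<le> (e*mm/MM)^2" using d0 by (intro power_mono) auto
    hence "MM * d^2 \<le> MM * (e*mm/MM)^2" using MM_pos by simp
    also have "\<dots> = (mm/MM) * (mm * e^2)" using MM_pos by (simp add: power2_eq_square field_simps)
    also have "\<dots> \<le> 1 * (mm * e^2)" using mm_MM MM_pos mm_pos by (intro mult_right_mono) auto
    finally show ?thesis by simp
  qed
  show "\<exists>d>0. \<forall>x. ode_solution g x \<and> dist (x 0) zz < d \<longrightarrow> (\<forall>t\<ge>0. dist (x t) zz < e)"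
  proof (intro exI[of _ d] conjI allI impI d0)
    fix x t assume H: "ode_solution g x \<and> dist (x 0) zz < d" and t: "0 \<le> (t::real)"
    have x0: "norm (x 0 - zz) < d" using H by (simp add: dist_norm)
    hence x0': "norm (x 0 - zz) < del0" by (simp add: d_def)
    have "V (x t) \<le> V (x t) * exp (cc * t)"
      using V_nonneg[of "x t"] cc_pos t by (simp add: mult_le_cancel_left1)
    also have "\<dots> \<le> V (x 0)" using decay[OF conjunct1[OF H] x0' t] .
    also have "\<dots> \<le> MM * (norm (x 0 - zz))^2" by (rule V_upper)
    also have "\<dots> < MM * d^2" using x0 MM_pos by (intro mult_strict_left_mono power_strict_mono) auto
    also have "\<dots> \<le> mm * e^2" by (rule dsq)
    finally have "mm * (norm (x t - zz))^2 < mm * e^2" using V_lower[of "x t"] by linarith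
    hence "(norm (x t - zz))^2 < e^2" using mm_pos by simp
    hence "norm (x t - zz) < e" using e by (simp add: power_less_imp_less_base)
    thus "dist (x t) zz < e" by (simp add: dist_norm)
  qed
next
  show "\<exists>d>0. \<forall>x. ode_solution g x \<and> dist (x 0) zz < d \<longrightarrow> (x \<longlongrightarrow> zz) at_top"
  proof (intro exI[of _ del0] conjI allI impI del0_pos)
    fix x assume H: "ode_solution g x \<and> dist (x 0) zz < del0"
    have x0: "norm (x 0 - zz) < del0" using H by (simp add: dist_norm)
    define K where "K = V (x 0) / mm"
    have ev: "\<forall>\<^sub>F t in at_top. (norm (x t - zz))^2 \<le> K * exp (- cc * t)"
    proof (rule eventually_at_top_linorderI[of 0])
      fix t :: real assume t: "t \<ge> 0"
      have "mm * (norm (x t - zz))^2 * exp (cc * t) \<le> V (x t) * exp (cc*t)"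
        using V_lower[of "x t"] by (intro mult_right_mono) auto
      also have "\<dots> \<le> V (x 0)" using decay[OF conjunct1[OF H] x0 t] .
      finally have "(norm (x t - zz))^2 * exp (cc * t) \<le> K" using mm_pos
        by (simp add: K_def field_simps)
      thus "(norm (x t - zz))^2 \<le> K * exp (- cc * t)"
        by (simp add: exp_minus field_simps)
    qed
    have lim0: "((\<lambda>t. K * exp (- cc * t)) \<longlongrightarrow> 0) at_top"
    proof -
      have "filterlim (\<lambda>t::real. - cc * t) at_bot at_top"
        using cc_pos by (intro filterlim_tendsto_neg_mult_at_bot[OF tendsto_const]) (auto simp: filterlim_ident)
      hence "((\<lambda>t. exp (- cc * t)) \<longlongrightarrow> 0) at_top"
        using filterlim_compose[OF exp_at_bot] filterlim_at_right_to_0 tendsto_mono at_within_le_nhds by blast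
      from tendsto_mult[OF tendsto_const this, of K] show ?thesis by simp
    qed
    have "((\<lambda>t. (norm (x t - zz))^2) \<longlongrightarrow> 0) at_top"
      by (rule tendsto_sandwich[OF _ ev tendsto_const lim0]) auto
    hence "((\<lambda>t. sqrt ((norm (x t - zz))^2)) \<longlongrightarrow> sqrt 0) at_top" by (rule tendsto_real_sqrt)
    hence "((\<lambda>t. norm (x t - zz)) \<longlongrightarrow> 0) at_top" by simp
    hence "((\<lambda>t. x t - zz) \<longlongrightarrow> 0) at_top" by (simp add: tendsto_norm_zero_iff)
    thus "(x \<longlongrightarrow> zz) at_top" by (simp add: LIM_zero_iff)
  qed
qed

end



theorem lemma7p2:
  fixes N :: nat and p q :: real
  assumes "N \<ge> 2" and "0 < p" and "p < 1" and "1 \<le> q" and "p * q < 1"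
  defines "\<zeta>2 \<equiv> vector [(2 + q) / (1 - p * q),
                          real N + p * (2 + q) / (1 - p * q),
                          real N - 2 + (2 + q) / (1 - p * q)] :: real^3"
  shows "gfield (real N) p q \<zeta>2 = 0 \<and>
         asymptotically_stable (gfield (real N) p q) \<zeta>2 \<and>
         (\<exists>A::real^3^3. (gfield (real N) p q has_derivative (\<lambda>h. A *v h)) (at \<zeta>2) \<and>
              (\<forall>\<mu>. real_matrix_eigenvalue A \<mu> \<longrightarrow> Re \<mu> < 0))"
proof -
  define a where "a = (2 + q) / (1 - p * q)"
  define b where "b = real N + p * (2 + q) / (1 - p * q)"
  define w where "w = real N - 2 + (2 + q) / (1 - p * q)"
  define s where "s = root 3 (p*q)"
  have pq0: "1 - p*q > 0" using assms by simp
  have q0: "q > 0" using assms by simp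
  have a0: "a > 0" unfolding a_def using pq0 q0 by simp
  have ba: "b = real N + p * a" unfolding a_def b_def by simp
  have wa: "w = real N - 2 + a" unfolding a_def w_def by simp
  have pa: "p * a > 0" using a0 assms by simp
  have b0: "b > 0" using ba pa by simp
  have w0: "w > 0" using wa a0 assms by simp
  have aeq: "a * (1 - p*q) = 2 + q" unfolding a_def using pq0 by simp
  have pqpos: "p*q > 0" using assms q0 by simp
  have s0: "s > 0" unfolding s_def using pqpos by simp
  have s1: "s < 1" unfolding s_def using assms by simp
  have s3: "s^3 = p*q" unfolding s_def using pqpos by (simp add: real_root_pow_pos2)
  have z: "\<zeta>2 = vector [a, b, w]" unfolding \<zeta>2_def a_def b_def w_def by simp
  interpret L: lv "gfield (real N) p q" a b w p q s
  proof
    show "\<And>y. gfield (real N) p q y $ 1 = y $ 1 * (y $ 3 - w - (y $ 1 - a))"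
      by (simp add: gfield_comp wa algebra_simps)
    show "\<And>y. gfield (real N) p q y $ 2 = y $ 2 * (p * (y $ 1 - a) - (y $ 2 - b))"
      by (simp add: gfield_comp ba algebra_simps)
    have e3: "q * b - q * real N - w = - q - real N" using aeq unfolding ba wa by (simp add: algebra_simps)
    show "\<And>y. gfield (real N) p q y $ 3 = y $ 3 * (q * (y $ 2 - b) - (y $ 3 - w))"
    proof -
      fix y :: "real^3"
      have "q * y $ 2 - q * real N + q + real N - y $ 3 = q * (y $ 2 - b) - (y $ 3 - w)"
        using e3 by (simp add: algebra_simps)
      thus "gfield (real N) p q y $ 3 = y $ 3 * (q * (y $ 2 - b) - (y $ 3 - w))"
        by (simp add: gfield_comp)
    qed
  qed (use a0 b0 w0 assms q0 s0 s1 s3 in auto)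
  have zz: "L.zz = \<zeta>2" by (simp add: L.zz_def z)
  define A where "A = (vector [vector[-a,0,a], vector[p*b,-b,0], vector[0,q*w,-w]] :: real^3^3)"
  have "(gfield (real N) p q has_derivative (\<lambda>h. A *v h)) (at \<zeta>2)"
  proof -
    have "vector [vector [\<zeta>2$3 - (real N-2) - 2*\<zeta>2$1, 0, \<zeta>2$1],
                      vector [p*\<zeta>2$2, real N + p*\<zeta>2$1 - 2*\<zeta>2$2, 0],
                      vector [0, q*\<zeta>2$3, q*\<zeta>2$2 - q*real N + q + real N - 2*\<zeta>2$3]] = A"
      using aeq unfolding A_def z by (simp add: vec_eq_iff forall_3 ba wa algebra_simps)
    thus ?thesis using gfield_deriv[of "real N" p q \<zeta>2] by simp
  qed
  moreover have "\<forall>\<mu>. real_matrix_eigenvalue A \<mu> \<longrightarrow> Re \<mu> < 0"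
    unfolding A_def using eig_lemma[OF a0 b0 w0 assms(2) q0 assms(5)] by blast
  ultimately show ?thesis using L.g_zero L.asym unfolding zz by blast
qed


end
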